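(* Let $v:2^N\to\mathbb{R}_+$ be a gross substitutes valuation over a finite set $N$. Let $A,B\subseteq N$ be disjoint and $j\in N\setminus(A\cup B)$. Assume that $v(\{i\}\mid A\cup\{j\})=0$ for all $i\in B$ and that $0\le v(\{j\}\mid A)-x<v(B\mid A)$ for some $x\ge0$. Then there is $i\in B$ such that $v(\{j\}\mid A)-x<v(\{i\}\mid A)$.
   Context: Valuations are monotone functions $v:2^N\to\mathbb{R}_+$ with $v(\emptyset)=0$, $N=[n]$. Marginal value: $v(T\mid S)=v(S\cup T)-v(S)$. For a price vector $p\in\mathbb{R}^n_+$, $p(S)=\sum_{j\in S}p_j$ and $D(v;p)=\arg\max_{S\subseteq N}(v(S)-p(S))$. The valuation $v$ is gross substitutes if for every price vector $p$, every $S\in D(v;p)$ and every price vector $p'\ge p$ (coordinatewise), there is $T\in D(v;p')$ with $S\cap\{j: p_j=p'_j\}\subseteq T$. *)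

theory Defs
  imports Complex_Main
begin

definition valuation :: "'a set \<Rightarrow> ('a set \<Rightarrow> real) \<Rightarrow> bool" where
  "valuation N v \<longleftrightarrow> v {} = 0 \<and> (\<forall>S. S \<subseteq> N \<longrightarrow> v S \<ge> 0)
     \<and> (\<forall>S T. S \<subseteq> T \<and> T \<subseteq> N \<longrightarrow> v S \<le> v T)"

definition marg :: "('a set \<Rightarrow> real) \<Rightarrow> 'a set \<Rightarrow> 'a set \<Rightarrow> real" where
  "marg v T S = v (S \<union> T) - v S"

definition price :: "('a \<Rightarrow> real) \<Rightarrow> 'a set \<Rightarrow> real" where
  "price p S = (\<Sum>j\<in>S. p j)"

definition demand :: "'a set \<Rightarrow> ('a set \<Rightarrow> real) \<Rightarrow> ('a \<Rightarrow> real) \<Rightarrow> 'a set set" where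
  "demand N v p = {S. S \<subseteq> N \<and> (\<forall>T. T \<subseteq> N \<longrightarrow> v T - price p T \<le> v S - price p S)}"

definition gross_substitutes :: "'a set \<Rightarrow> ('a set \<Rightarrow> real) \<Rightarrow> bool" where
  "gross_substitutes N v \<longleftrightarrow>
     (\<forall>p p' S. (\<forall>j\<in>N. 0 \<le> p j \<and> p j \<le> p' j) \<longrightarrow> S \<in> demand N v p \<longrightarrow>
        (\<exists>T\<in>demand N v p'. S \<inter> {j\<in>N. p j = p' j} \<subseteq> T))"

end

theory Submission
  imports Defs
begin

lemma demand_exists:
  assumes "finite N"
  shows "\<exists>S. S \<in> demand N v p"
proof -
  let ?f = "\<lambda>S. v S - price p S"
  have fin: "finite (?f ` Pow N)" using assms by simp
  have ne: "?f ` Pow N \<noteq> {}" by blast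
  have "Max (?f ` Pow N) \<in> ?f ` Pow N" using Max_in[OF fin ne] .
  then obtain S where S: "S \<in> Pow N" "?f S = Max (?f ` Pow N)" by auto
  have "\<forall>T. T \<subseteq> N \<longrightarrow> ?f T \<le> ?f S"
    using S Max_ge[OF fin] by auto
  then show ?thesis using S unfolding demand_def by auto
qed

lemma price_ge_elem:
  assumes "finite T" "k \<in> T" "\<forall>m\<in>T. q m \<ge> 0"
  shows "price q T \<ge> q k"
  unfolding price_def using member_le_sum[of k T q] assms by auto

theorem mainTheorem8:
  fixes N :: "'a set" and v :: "'a set \<Rightarrow> real" and A B :: "'a set" and j :: 'a and x :: real
  assumes "finite N"
    and "valuation N v"
    and "gross_substitutes N v"
    and "A \<subseteq> N" and "B \<subseteq> N" and "A \<inter> B = {}"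
    and "j \<in> N - (A \<union> B)"
    and "\<forall>i\<in>B. marg v {i} (A \<union> {j}) = 0"
    and "x \<ge> 0"
    and "0 \<le> marg v {j} A - x"
    and "marg v {j} A - x < marg v B A"
  shows "\<exists>i\<in>B. marg v {j} A - x < marg v {i} A"
proof (rule ccontr)
  assume nc: "\<not> (\<exists>i\<in>B. marg v {j} A - x < marg v {i} A)"
  note fN = assms(1)
  have v0: "\<And>S. S \<subseteq> N \<Longrightarrow> v S \<ge> 0" and vm: "\<And>S T. S \<subseteq> T \<Longrightarrow> T \<subseteq> N \<Longrightarrow> v S \<le> v T"
    using assms(2) unfolding valuation_def by auto
  define d where "d = v (A \<union> {j}) - v A - x"
  define \<Delta> where "\<Delta> = v (A \<union> B) - v A - d"
  define \<epsilon> where "\<epsilon> = \<Delta> / (2 * (real (card B) + 1))"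
  define H where "H = v N + 1"
  have d0: "d \<ge> 0" using assms(10) unfolding d_def marg_def by (simp add: Un_commute)
  have \<Delta>0: "\<Delta> > 0" using assms(11) unfolding \<Delta>_def d_def marg_def by (simp add: Un_commute)
  have e0: "\<epsilon> > 0" unfolding \<epsilon>_def using \<Delta>0 by (simp add: add_pos_nonneg)
  have ecard: "\<epsilon> * real (card B) < \<Delta>"
  proof -
    have "\<epsilon> * real (card B) = \<Delta> * (real (card B) / (2 * (real (card B) + 1)))"
      unfolding \<epsilon>_def by simp
    also have "\<dots> < \<Delta> * 1"
      using \<Delta>0 by (intro mult_strict_left_mono) (auto simp: divide_less_eq)
    finally show ?thesis by simp
  qed
  have small: "\<And>i. i \<in> B \<Longrightarrow> v (A \<union> {i}) \<le> v A + d"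
    using nc unfolding marg_def d_def by (auto simp: Un_commute)
  have jz: "\<And>i. i \<in> B \<Longrightarrow> v (A \<union> {i, j}) = v (A \<union> {j})"
  proof -
    fix i assume "i \<in> B"
    then have "marg v {i} (A \<union> {j}) = 0" using assms(8) by blast
    then have "v ((A \<union> {j}) \<union> {i}) - v (A \<union> {j}) = 0" unfolding marg_def .
    moreover have "(A \<union> {j}) \<union> {i} = A \<union> {i, j}" by auto
    ultimately show "v (A \<union> {i, j}) = v (A \<union> {j})" by simp
  qed
  have H0: "H > 0" unfolding H_def using v0[of N] by simp
  have vH: "\<And>T. T \<subseteq> N \<Longrightarrow> v T < H" proof - fix T assume "T \<subseteq> N" then have "v T \<le> v N" using vm by blast then show "v T < H" unfolding H_def by simp qed
  have jA: "j \<notin> A" "j \<notin> B" "j \<in> N" using assms(7) by auto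
  define p where "p = (\<lambda>k. if k \<in> A then 0 else if k \<in> B then \<epsilon> else if k = j then x else H)"
  have pnn: "\<And>k. p k \<ge> 0" unfolding p_def using e0 H0 assms(9) by auto
  obtain S where S: "S \<in> demand N v p" using demand_exists[OF fN] by blast
  have SN: "S \<subseteq> N" and Sopt: "\<And>T. T \<subseteq> N \<Longrightarrow> v T - price p T \<le> v S - price p S"
    using S unfolding demand_def by auto
  have finS: "finite S" using SN fN finite_subset by blast
  have pAB: "price p (A \<union> B) = \<epsilon> * real (card B)"
  proof -
    have fA: "finite A" "finite B" using assms(4,5) fN finite_subset by auto
    have "price p (A \<union> B) = price p A + price p B"
      unfolding price_def using fA assms(6) by (simp add: sum.union_disjoint)
    moreover have "price p A = 0" unfolding price_def p_def by simp
    moreover have "price p B = (\<Sum>k\<in>B. \<epsilon>)" unfolding price_def p_def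
      using assms(6) by (intro sum.cong) auto
    ultimately show ?thesis by simp
  qed
  have uS: "v S - price p S > v A + d"
    using Sopt[of "A \<union> B"] assms(4,5) pAB ecard unfolding \<Delta>_def by auto
  have "S \<inter> B \<noteq> {}"
  proof
    assume SB: "S \<inter> B = {}"
    have SAj: "S \<subseteq> A \<union> {j}"
    proof
      fix k assume k: "k \<in> S"
      show "k \<in> A \<union> {j}"
      proof (rule ccontr)
        assume "k \<notin> A \<union> {j}"
        then have "p k = H" using SB k unfolding p_def by auto
        then have "price p S \<ge> H" using price_ge_elem[OF finS k] pnn by metis
        then have "v S - price p S < 0" using vH[OF SN] by simp
        moreover have "v A \<ge> 0" using v0 assms(4) by simp
        ultimately show False using uS d0 by simp
      qed
    qed
    have "price p S = (\<Sum>k\<in>S. if k = j then x else 0)"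
      unfolding price_def p_def using SAj jA by (intro sum.cong) auto
    also have "\<dots> = (if j \<in> S then x else 0)" using finS by simp
    finally have pS: "price p S = (if j \<in> S then x else 0)" .
    show False
    proof (cases "j \<in> S")
      case True
      have "v S \<le> v (A \<union> {j})" using SAj assms(4) jA by (intro vm) auto
      then show ?thesis using uS pS True unfolding d_def by simp
    next
      case False
      have "v S \<le> v A" using SAj assms(4) False by (intro vm) auto
      then show ?thesis using uS pS False d0 by simp
    qed
  qed
  then obtain i where iS: "i \<in> S" and iB: "i \<in> B" by blast
  have ij: "i \<noteq> j" "i \<notin> A" using iB jA assms(6) by auto
  define p' where "p' = (\<lambda>k. if k \<in> B \<and> k \<noteq> i then p k + H else p k)"
  have pp': "\<forall>k\<in>N. 0 \<le> p k \<and> p k \<le> p' k" using pnn H0 unfolding p'_def by auto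
  have p'nn: "\<And>k. p' k \<ge> 0" using pnn H0 unfolding p'_def by auto
  obtain T where T: "T \<in> demand N v p'" and ST: "S \<inter> {k\<in>N. p k = p' k} \<subseteq> T"
    using assms(3) pp' S unfolding gross_substitutes_def by blast
  have iT: "i \<in> T" using ST iS SN unfolding p'_def by auto
  have TN: "T \<subseteq> N" and Topt: "\<And>U. U \<subseteq> N \<Longrightarrow> v U - price p' U \<le> v T - price p' T"
    using T unfolding demand_def by auto
  have finT: "finite T" using TN fN finite_subset by blast
  have pAj: "price p' (A \<union> {j}) = x"
  proof -
    have fA: "finite A" using assms(4) fN finite_subset by auto
    have "price p' (A \<union> {j}) = (\<Sum>k\<in>A \<union> {j}. if k = j then x else 0)"
      unfolding price_def p'_def p_def using jA assms(6) by (intro sum.cong) auto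
    also have "\<dots> = x" using fA by simp
    finally show ?thesis .
  qed
  have uT: "v T - price p' T \<ge> v A + d"
    using Topt[of "A \<union> {j}"] assms(4) jA pAj unfolding d_def by auto
  have TAij: "T \<subseteq> A \<union> {i, j}"
  proof
    fix k assume k: "k \<in> T"
    show "k \<in> A \<union> {i, j}"
    proof (rule ccontr)
      assume "k \<notin> A \<union> {i, j}"
      then have "p' k \<ge> H" using e0 unfolding p'_def p_def by auto
      then have "price p' T \<ge> H" using price_ge_elem[OF finT k] p'nn by (metis order_trans)
      then have "v T - price p' T < 0" using vH[OF TN] by simp
      moreover have "v A \<ge> 0" using v0 assms(4) by simp
      ultimately show False using uT d0 by simp
    qed
  qed
  have "price p' T = (\<Sum>k\<in>T. (if k = i then \<epsilon> else 0) + (if k = j then x else 0))"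
    unfolding price_def p'_def p_def using TAij jA ij iB assms(6) by (intro sum.cong) auto
  also have "\<dots> = \<epsilon> + (if j \<in> T then x else 0)"
    using finT iT by (simp add: sum.distrib)
  finally have pT: "price p' T = \<epsilon> + (if j \<in> T then x else 0)" .
  show False
  proof (cases "j \<in> T")
    case True
    have "v T \<le> v (A \<union> {i, j})" using TAij assms(4) jA iB assms(5) by (intro vm) auto
    then show ?thesis using uT pT True jz[OF iB] e0 unfolding d_def by simp
  next
    case False
    have "v T \<le> v (A \<union> {i})" using TAij assms(4,5) False iB by (intro vm) auto
    then show ?thesis using uT pT False small[OF iB] e0 by simp
  qed
qed

end
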